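(* Assume (A1)–(A2) below hold uniformly for all edges. Let $\boldsymbol u=(\rho,w)$ and $\hat{\boldsymbol u}=(\hat\rho,\hat w)$ be classical network solutions on $[0,T]$ with parameters and data $(\varepsilon,\gamma,h_\partial)$ and $(\hat\varepsilon,\hat\gamma,\hat h_\partial)$ respectively, and assume $(\hat\rho,\hat w)$ is Lipschitz on every edge. For each edge let $h^e(\tilde\rho,\tilde w)=\varepsilon^2\tilde w^2/2+P'(\tilde\rho)+gz^e$ and $m^e(\tilde\rho,\tilde w)=a^e\tilde\rho\tilde w$ (the co-state maps with the unperturbed parameter $\varepsilon$). Then at every time $$-\sum_{v\in\mathcal{V}}\sum_{e\in\mathcal{E}(v)}\big(h^e(\rho^e,w^e)-h^e(\hat\rho^e,\hat w^e)\big)(v)\,\big(m^e(\rho^e,w^e)-m^e(\hat\rho^e,\hat w^e)\big)(v)\,n^e(v)\le\hat C_\partial\big(|h_\partial-\hat h_\partial|+|\varepsilon^2-\hat\varepsilon^2|\big),$$ where $|h_\partial-\hat h_\partial|^2=\sum_{v\in\mathcal{V}_\partial}|h^v_\partial-\hat h^v_\partial|^2$ and $\hat C_\partial$ depends only on the bounds in (A1)–(A2) and the Lipschitz bounds of $(\hat\rho,\hat w)$.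
   Context: Let $(\mathcal{V},\mathcal{E})$ be a finite, connected, directed graph, each edge $e$ identified with $(0,\ell^e)$; $\mathcal{E}(v)$ the edges incident to $v$; $\mathcal{V}_0=\{v:|\mathcal{E}(v)|>1\}$, $\mathcal{V}_\partial=\{v:|\mathcal{E}(v)|=1\}$; $n^e(v)=1$ if $v$ is the end point ($x=\ell^e$) of $e$, $n^e(v)=-1$ if $v$ is its start point ($x=0$). Edge data: cross sections $a^e$, elevations $z^e$, friction coefficients $\gamma^e>0$; $g$ constant; $P:(0,\infty)\to\mathbb{R}$ smooth strictly convex. For parameter $\varepsilon\ge0$ the network problem reads on each edge $a^e\partial_\tau\rho^e+\partial_xm^e=0$, $\varepsilon^2\partial_\tau w^e+\partial_xh^e+\gamma^e|w^e|w^e=0$, $h^e=\varepsilon^2|w^e|^2/2+P'(\rho^e)+gz^e$, $m^e=a^e\rho^ew^e$; at $v\in\mathcal{V}_0$: $\sum_{e\in\mathcal{E}(v)}m^e(v)n^e(v)=0$ and $h^e(v)=h^v$ for all $e\in\mathcal{E}(v)$ (a common value); at $v\in\mathcal{V}_\partial$: $h^e(v)=h^v_\partial$. The perturbed solution uses $\hat\varepsilon$, $\hat\gamma^e$, $\hat h_\partial$ and its own enthalpy $\hat h^e=\hat\varepsilon^2|\hat w^e|^2/2+P'(\hat\rho^e)+gz^e$ in these conditions. (A1) (each edge): positive constants $\underline\rho\le\bar\rho$, $\bar w$, $\bar\varepsilon$ with $\rho P''(\rho)\ge4\bar\varepsilon^2\bar w^2$ for $\underline\rho\le\rho\le\bar\rho$;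 $0<\underline a\le a^e\le\bar a$; $|gz^e|\le\bar g\bar z$. (A2): $0\le\varepsilon,\hat\varepsilon\le\bar\varepsilon$, $0<\underline\gamma\le\gamma^e,\hat\gamma^e\le\bar\gamma$, solutions satisfy $\underline\rho\le\rho^e\le\bar\rho$, $-\bar w\le w^e\le\bar w$. A classical network solution on $[0,T]$: per edge $(\rho^e,w^e)\in C^1([0,T];L^2(0,\ell^e)^2)$ satisfying the bounds, $(h^e,m^e)\in C^0([0,T];H^1(0,\ell^e)^2)$, the edge equations holding weakly ($(a^e\partial_\tau\rho^e,q)+(\partial_xm^e,q)=0$, $(\varepsilon^2\partial_\tau w^e,r)-(h^e,\partial_xr)+(\gamma^e|w^e|w^e,r)=-[h^er]_0^{\ell^e}$ for all $q,r\in H^1(0,\ell^e)$), and the coupling and boundary conditions holding for all times. *)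

theory Defs
  imports "HOL-Analysis.Analysis"
begin

definition edges_at :: "'e set \<Rightarrow> ('e \<Rightarrow> 'v) \<Rightarrow> ('e \<Rightarrow> 'v) \<Rightarrow> 'v \<Rightarrow> 'e set" where
  "edges_at E src tgt v = {e \<in> E. src e = v \<or> tgt e = v}"

definition inner_vertices :: "'v set \<Rightarrow> 'e set \<Rightarrow> ('e \<Rightarrow> 'v) \<Rightarrow> ('e \<Rightarrow> 'v) \<Rightarrow> 'v set" where
  "inner_vertices V E src tgt = {v \<in> V. card (edges_at E src tgt v) > 1}"

definition boundary_vertices :: "'v set \<Rightarrow> 'e set \<Rightarrow> ('e \<Rightarrow> 'v) \<Rightarrow> ('e \<Rightarrow> 'v) \<Rightarrow> 'v set" where
  "boundary_vertices V E src tgt = {v \<in> V. card (edges_at E src tgt v) = 1}"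

definition nsign :: "('e \<Rightarrow> 'v) \<Rightarrow> ('e \<Rightarrow> 'v) \<Rightarrow> 'v \<Rightarrow> 'e \<Rightarrow> real" where
  "nsign src tgt v e = (if tgt e = v then 1 else if src e = v then -1 else 0)"

text \<open>Position on edge e (identified with (0, l e)) of the vertex v.\<close>
definition vpos :: "('e \<Rightarrow> 'v) \<Rightarrow> ('e \<Rightarrow> real) \<Rightarrow> 'v \<Rightarrow> 'e \<Rightarrow> real" where
  "vpos tgt l v e = (if tgt e = v then l e else 0)"

definition network_graph ::
  "'v set \<Rightarrow> 'e set \<Rightarrow> ('e \<Rightarrow> 'v) \<Rightarrow> ('e \<Rightarrow> 'v) \<Rightarrow> ('e \<Rightarrow> real) \<Rightarrow> bool" where
  "network_graph V E src tgt l \<longleftrightarrow>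
     finite V \<and> finite E \<and>
     (\<forall>e\<in>E. src e \<in> V \<and> tgt e \<in> V \<and> src e \<noteq> tgt e \<and> 0 < l e) \<and>
     (\<forall>u\<in>V. \<forall>v\<in>V. (u, v) \<in> ({(src e, tgt e) | e. e \<in> E} \<union> {(tgt e, src e) | e. e \<in> E})\<^sup>*)"

definition L2_on :: "real \<Rightarrow> (real \<Rightarrow> real) \<Rightarrow> bool" where
  "L2_on l f \<longleftrightarrow> f \<in> borel_measurable (lebesgue_on {0..l}) \<and> (\<lambda>x. (f x)\<^sup>2) integrable_on {0..l}"

definition L2norm :: "real \<Rightarrow> (real \<Rightarrow> real) \<Rightarrow> real" where
  "L2norm l f = sqrt (integral {0..l} (\<lambda>x. (f x)\<^sup>2))"

text \<open>f is in H^1(0,l) with weak derivative df (f taken as its continuous representative).\<close>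
definition H1_on :: "real \<Rightarrow> (real \<Rightarrow> real) \<Rightarrow> (real \<Rightarrow> real) \<Rightarrow> bool" where
  "H1_on l f df \<longleftrightarrow> L2_on l f \<and> L2_on l df \<and> df integrable_on {0..l} \<and>
     (\<forall>x\<in>{0..l}. f x = f 0 + integral {0..x} df)"

text \<open>u in C^1([0,T]; L^2(0,l)) with time derivative du.\<close>
definition C1_L2 :: "real \<Rightarrow> real \<Rightarrow> (real \<Rightarrow> real \<Rightarrow> real) \<Rightarrow> (real \<Rightarrow> real \<Rightarrow> real) \<Rightarrow> bool" where
  "C1_L2 T l u du \<longleftrightarrow>
     (\<forall>t\<in>{0..T}. L2_on l (u t) \<and> L2_on l (du t)) \<and>
     (\<forall>t\<in>{0..T}. ((\<lambda>s. L2norm l (\<lambda>x. (u s x - u t x) / (s - t) - du t x)) \<longlongrightarrow> 0) (at t within {0..T})) \<and>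
     (\<forall>t\<in>{0..T}. ((\<lambda>s. L2norm l (\<lambda>x. du s x - du t x)) \<longlongrightarrow> 0) (at t within {0..T}))"

text \<open>f in C^0([0,T]; H^1(0,l)) with spatial weak derivative df.\<close>
definition C0_H1 :: "real \<Rightarrow> real \<Rightarrow> (real \<Rightarrow> real \<Rightarrow> real) \<Rightarrow> (real \<Rightarrow> real \<Rightarrow> real) \<Rightarrow> bool" where
  "C0_H1 T l f df \<longleftrightarrow>
     (\<forall>t\<in>{0..T}. H1_on l (f t) (df t)) \<and>
     (\<forall>t\<in>{0..T}. ((\<lambda>s. L2norm l (\<lambda>x. f s x - f t x) + L2norm l (\<lambda>x. df s x - df t x)) \<longlongrightarrow> 0)
        (at t within {0..T}))"

definition smooth_strictly_convex :: "(real \<Rightarrow> real) \<Rightarrow> bool" where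
  "smooth_strictly_convex P \<longleftrightarrow>
     (\<forall>n. \<forall>x>0. ((deriv ^^ n) P) differentiable (at x)) \<and>
     (\<forall>x>0. \<forall>y>0. \<forall>u. 0 < u \<and> u < 1 \<and> x \<noteq> y \<longrightarrow>
        P (u * x + (1 - u) * y) < u * P x + (1 - u) * P y)"

definition enthalpy :: "real \<Rightarrow> (real \<Rightarrow> real) \<Rightarrow> real \<Rightarrow> real \<Rightarrow> real \<Rightarrow> real \<Rightarrow> real" where
  "enthalpy eps P g zx r v = eps\<^sup>2 * v\<^sup>2 / 2 + deriv P r + g * zx"

definition massflux :: "real \<Rightarrow> real \<Rightarrow> real \<Rightarrow> real" where
  "massflux a r v = a * r * v"

definition classical_network_solution ::
  "'v set \<Rightarrow> 'e set \<Rightarrow> ('e \<Rightarrow> 'v) \<Rightarrow> ('e \<Rightarrow> 'v) \<Rightarrow> ('e \<Rightarrow> real) \<Rightarrow>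
   ('e \<Rightarrow> real) \<Rightarrow> ('e \<Rightarrow> real \<Rightarrow> real) \<Rightarrow> real \<Rightarrow> (real \<Rightarrow> real) \<Rightarrow>
   real \<Rightarrow> ('e \<Rightarrow> real) \<Rightarrow> ('v \<Rightarrow> real) \<Rightarrow> real \<Rightarrow> real \<Rightarrow> real \<Rightarrow> real \<Rightarrow>
   ('e \<Rightarrow> real \<Rightarrow> real \<Rightarrow> real) \<Rightarrow> ('e \<Rightarrow> real \<Rightarrow> real \<Rightarrow> real) \<Rightarrow> bool" where
  "classical_network_solution V E src tgt l a z g P eps gam hb rlo rhi wbar T rho w \<longleftrightarrow>
    (let H = (\<lambda>e t x. enthalpy eps P g (z e x) (rho e t x) (w e t x));
         M = (\<lambda>e t x. massflux (a e) (rho e t x) (w e t x)) in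
    (\<exists>rt wt dH dM.
      (\<forall>e\<in>E.
        C1_L2 T (l e) (rho e) (rt e) \<and> C1_L2 T (l e) (w e) (wt e) \<and>
        (\<forall>t\<in>{0..T}. AE x in lebesgue_on {0..l e}.
            rlo \<le> rho e t x \<and> rho e t x \<le> rhi \<and> - wbar \<le> w e t x \<and> w e t x \<le> wbar) \<and>
        C0_H1 T (l e) (H e) (dH e) \<and> C0_H1 T (l e) (M e) (dM e) \<and>
        (\<forall>t\<in>{0..T}. \<forall>q dq. H1_on (l e) q dq \<longrightarrow>
           integral {0..l e} (\<lambda>x. a e * rt e t x * q x) + integral {0..l e} (\<lambda>x. dM e t x * q x) = 0) \<and>
        (\<forall>t\<in>{0..T}. \<forall>r dr. H1_on (l e) r dr \<longrightarrow>
           integral {0..l e} (\<lambda>x. eps\<^sup>2 * wt e t x * r x)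
           - integral {0..l e} (\<lambda>x. H e t x * dr x)
           + integral {0..l e} (\<lambda>x. gam e * \<bar>w e t x\<bar> * w e t x * r x)
           = - (H e t (l e) * r (l e) - H e t 0 * r 0))) \<and>
      (\<forall>t\<in>{0..T}. \<forall>v\<in>inner_vertices V E src tgt.
         (\<Sum>e\<in>edges_at E src tgt v. M e t (vpos tgt l v e) * nsign src tgt v e) = 0 \<and>
         (\<exists>hv. \<forall>e\<in>edges_at E src tgt v. H e t (vpos tgt l v e) = hv)) \<and>
      (\<forall>t\<in>{0..T}. \<forall>v\<in>boundary_vertices V E src tgt.
         \<forall>e\<in>edges_at E src tgt v. H e t (vpos tgt l v e) = hb v)))"

end

theory Submission
  imports Defs
begin

lemma AE_cont_closed:
  fixes f :: "real \<Rightarrow> real"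
  assumes l: "0 < l" and cont: "continuous_on {0..l} f" and C: "closed C"
    and ae: "AE x in lebesgue_on {0..l}. f x \<in> C" and x: "x \<in> {0..l}"
  shows "f x \<in> C"
proof -
  have "AE x in lebesgue. x \<in> {0..l} \<longrightarrow> f x \<in> C"
    using ae by (subst (asm) AE_restrict_space_iff) auto
  then have ae2: "AE x \<in> {0<..<l} in lebesgue. x \<in> {0..l} \<inter> f -` C"
    by eventually_elim auto
  have cl: "closed ({0..l} \<inter> f -` C)"
    using continuous_closed_preimage[OF cont closed_atLeastAtMost C] .
  have "{0<..<l} \<subseteq> {0..l} \<inter> f -` C"
    using mem_closed_if_AE_lebesgue_open[OF open_greaterThanLessThan cl ae2] by blast
  then have "closure {0<..<l} \<subseteq> {0..l} \<inter> f -` C"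
    using cl closure_minimal by blast
  with l x show ?thesis by auto
qed

lemma H1_cont:
  assumes "H1_on l f df" shows "continuous_on {0..l} f"
proof -
  have all: "L2_on l f \<and> L2_on l df \<and> df integrable_on {0..l} \<and>
     (\<forall>x\<in>{0..l}. f x = f 0 + integral {0..x} df)"
    using assms unfolding H1_on_def .
  note ii = all[THEN conjunct2, THEN conjunct2, THEN conjunct1]
  note eq = all[THEN conjunct2, THEN conjunct2, THEN conjunct2]
  have c: "continuous_on {0..l} (\<lambda>x. f 0 + integral {0..x} df)"
    by (rule continuous_on_add[OF continuous_on_const indefinite_integral_continuous_1[OF ii]])
  show ?thesis
  proof (rule continuous_on_eq[OF c])
    fix x assume xin: "x \<in> {0..l}"
    show "f 0 + integral {0..x} df = f x" using bspec[OF eq xin] by (rule sym)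
  qed
qed

lemma lip_cont:
  fixes w :: "real \<Rightarrow> real \<Rightarrow> real" and T l t L :: real
  assumes "L-lipschitz_on ({0..T} \<times> {0..l}) (\<lambda>(t, x). w t x)" "t \<in> {0..T}"
  shows "continuous_on {0..l} (w t)"
proof -
  have c1: "continuous_on {0..l} (\<lambda>x::real. (t, x))"
    by (rule continuous_on_Pair[OF continuous_on_const continuous_on_id])
  have sub: "(\<lambda>x. (t, x)) ` {0..l} \<subseteq> {0..T} \<times> {0..l}" using assms(2) by auto
  have "continuous_on {0..l} (\<lambda>x. (\<lambda>(t, x). w t x) (t, x))"
    by (rule continuous_on_compose2[OF lipschitz_on_continuous_on[OF assms(1)] c1 sub])
  then show ?thesis by simp
qed

lemma graph_facts:
  assumes "network_graph V E src tgt l"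
  shows "finite V" "finite E" "\<forall>e\<in>E. src e \<in> V \<and> tgt e \<in> V \<and> src e \<noteq> tgt e \<and> 0 < l e"
proof -
  from assms show "finite V" "finite E" "\<forall>e\<in>E. src e \<in> V \<and> tgt e \<in> V \<and> src e \<noteq> tgt e \<and> 0 < l e"
    unfolding network_graph_def by simp_all
qed

lemma H1_of_C0:
  assumes "C0_H1 T l f df" "t \<in> {0..T}" shows "H1_on l (f t) (df t)"
proof -
  from assms(1) have "\<forall>t\<in>{0..T}. H1_on l (f t) (df t)" unfolding C0_H1_def by (elim conjE)
  then show ?thesis using assms(2) by (rule bspec)
qed

lemma cns_facts:
  assumes cns: "classical_network_solution V E src tgt l a z g P eps gam hb rlo rhi wbar T rho w"
    and graph: "network_graph V E src tgt l"
    and a: "\<forall>e\<in>E. 0 \<le> a e \<and> a e \<le> ahi" and rlo: "0 < rlo" and t: "t \<in> {0..T}"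
  shows "\<forall>e\<in>E. \<forall>x\<in>{0..l e}. \<bar>massflux (a e) (rho e t x) (w e t x)\<bar> \<le> ahi*rhi*wbar"
    and "\<forall>e\<in>E. AE x in lebesgue_on {0..l e}. -wbar \<le> w e t x \<and> w e t x \<le> wbar"
    and "\<forall>v\<in>inner_vertices V E src tgt.
           (\<Sum>e\<in>edges_at E src tgt v. massflux (a e) (rho e t (vpos tgt l v e)) (w e t (vpos tgt l v e)) * nsign src tgt v e) = 0
         \<and> (\<exists>hv. \<forall>e\<in>edges_at E src tgt v. enthalpy eps P g (z e (vpos tgt l v e)) (rho e t (vpos tgt l v e)) (w e t (vpos tgt l v e)) = hv)"
    and "\<forall>v\<in>boundary_vertices V E src tgt. \<forall>e\<in>edges_at E src tgt v.
           enthalpy eps P g (z e (vpos tgt l v e)) (rho e t (vpos tgt l v e)) (w e t (vpos tgt l v e)) = hb v"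
proof -
  obtain rt wt dH dM where
    E0: "\<forall>e\<in>E.
        C1_L2 T (l e) (rho e) (rt e) \<and> C1_L2 T (l e) (w e) (wt e) \<and>
        (\<forall>t\<in>{0..T}. AE x in lebesgue_on {0..l e}.
            rlo \<le> rho e t x \<and> rho e t x \<le> rhi \<and> - wbar \<le> w e t x \<and> w e t x \<le> wbar) \<and>
        C0_H1 T (l e) (\<lambda>t x. enthalpy eps P g (z e x) (rho e t x) (w e t x)) (dH e) \<and>
        C0_H1 T (l e) (\<lambda>t x. massflux (a e) (rho e t x) (w e t x)) (dM e) \<and>
        (\<forall>t\<in>{0..T}. \<forall>q dq. H1_on (l e) q dq \<longrightarrow>
           integral {0..l e} (\<lambda>x. a e * rt e t x * q x) + integral {0..l e} (\<lambda>x. dM e t x * q x) = 0) \<and>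
        (\<forall>t\<in>{0..T}. \<forall>r dr. H1_on (l e) r dr \<longrightarrow>
           integral {0..l e} (\<lambda>x. eps\<^sup>2 * wt e t x * r x)
           - integral {0..l e} (\<lambda>x. enthalpy eps P g (z e x) (rho e t x) (w e t x) * dr x)
           + integral {0..l e} (\<lambda>x. gam e * \<bar>w e t x\<bar> * w e t x * r x)
           = - (enthalpy eps P g (z e (l e)) (rho e t (l e)) (w e t (l e)) * r (l e)
                - enthalpy eps P g (z e 0) (rho e t 0) (w e t 0) * r 0))"
    and IV: "\<forall>t\<in>{0..T}. \<forall>v\<in>inner_vertices V E src tgt.
         (\<Sum>e\<in>edges_at E src tgt v. massflux (a e) (rho e t (vpos tgt l v e)) (w e t (vpos tgt l v e)) * nsign src tgt v e) = 0 \<and>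
         (\<exists>hv. \<forall>e\<in>edges_at E src tgt v. enthalpy eps P g (z e (vpos tgt l v e)) (rho e t (vpos tgt l v e)) (w e t (vpos tgt l v e)) = hv)"
    and BV: "\<forall>t\<in>{0..T}. \<forall>v\<in>boundary_vertices V E src tgt.
         \<forall>e\<in>edges_at E src tgt v. enthalpy eps P g (z e (vpos tgt l v e)) (rho e t (vpos tgt l v e)) (w e t (vpos tgt l v e)) = hb v"
    using cns unfolding classical_network_solution_def Let_def
    by (elim exE conjE) (rule that, assumption+)
  have E1: "\<forall>e\<in>E.
        C1_L2 T (l e) (rho e) (rt e) \<and> C1_L2 T (l e) (w e) (wt e) \<and>
        (\<forall>t\<in>{0..T}. AE x in lebesgue_on {0..l e}.
            rlo \<le> rho e t x \<and> rho e t x \<le> rhi \<and> - wbar \<le> w e t x \<and> w e t x \<le> wbar) \<and>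
        C0_H1 T (l e) (\<lambda>t x. massflux (a e) (rho e t x) (w e t x)) (dM e)"
  proof
    fix e assume e: "e \<in> E"
    note X = bspec[OF E0 e]
    show "C1_L2 T (l e) (rho e) (rt e) \<and> C1_L2 T (l e) (w e) (wt e) \<and>
        (\<forall>t\<in>{0..T}. AE x in lebesgue_on {0..l e}.
            rlo \<le> rho e t x \<and> rho e t x \<le> rhi \<and> - wbar \<le> w e t x \<and> w e t x \<le> wbar) \<and>
        C0_H1 T (l e) (\<lambda>t x. massflux (a e) (rho e t x) (w e t x)) (dM e)"
      using X by (elim conjE) (intro conjI; assumption)
  qed
  show "\<forall>v\<in>inner_vertices V E src tgt.
           (\<Sum>e\<in>edges_at E src tgt v. massflux (a e) (rho e t (vpos tgt l v e)) (w e t (vpos tgt l v e)) * nsign src tgt v e) = 0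
         \<and> (\<exists>hv. \<forall>e\<in>edges_at E src tgt v. enthalpy eps P g (z e (vpos tgt l v e)) (rho e t (vpos tgt l v e)) (w e t (vpos tgt l v e)) = hv)"
    using bspec[OF IV t] .
  show "\<forall>v\<in>boundary_vertices V E src tgt. \<forall>e\<in>edges_at E src tgt v.
           enthalpy eps P g (z e (vpos tgt l v e)) (rho e t (vpos tgt l v e)) (w e t (vpos tgt l v e)) = hb v"
    using bspec[OF BV t] .
  show "\<forall>e\<in>E. AE x in lebesgue_on {0..l e}. -wbar \<le> w e t x \<and> w e t x \<le> wbar"
  proof
    fix e assume e: "e \<in> E"
    have "AE x in lebesgue_on {0..l e}.
            rlo \<le> rho e t x \<and> rho e t x \<le> rhi \<and> - wbar \<le> w e t x \<and> w e t x \<le> wbar"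
      using bspec[OF bspec[OF E1 e, THEN conjunct2, THEN conjunct2, THEN conjunct1] t] .
    then show "AE x in lebesgue_on {0..l e}. -wbar \<le> w e t x \<and> w e t x \<le> wbar"
      by eventually_elim auto
  qed
  show "\<forall>e\<in>E. \<forall>x\<in>{0..l e}. \<bar>massflux (a e) (rho e t x) (w e t x)\<bar> \<le> ahi*rhi*wbar"
  proof (intro ballI)
    fix e x assume e: "e \<in> E" and x: "x \<in> {0..l e}"
    have l: "0 < l e" using bspec[OF graph_facts(3)[OF graph] e] by simp
    have ae: "AE x in lebesgue_on {0..l e}.
            rlo \<le> rho e t x \<and> rho e t x \<le> rhi \<and> - wbar \<le> w e t x \<and> w e t x \<le> wbar"
      using bspec[OF bspec[OF E1 e, THEN conjunct2, THEN conjunct2, THEN conjunct1] t] .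
    have ae2: "AE x in lebesgue_on {0..l e}. massflux (a e) (rho e t x) (w e t x) \<in> {-(ahi*rhi*wbar)..ahi*rhi*wbar}"
      using ae
    proof eventually_elim
      case (elim x)
      have a0: "0 \<le> a e" "a e \<le> ahi" using a e by auto
      have "\<bar>a e * rho e t x * w e t x\<bar> = a e * rho e t x * \<bar>w e t x\<bar>"
        using a0 elim rlo by (simp add: abs_mult)
      also have "\<dots> \<le> ahi * rhi * wbar"
      proof (rule mult_mono)
        show "a e * rho e t x \<le> ahi * rhi"
          by (rule mult_mono) (use a0 elim rlo in auto)
        show "0 \<le> ahi * rhi" using a0 elim rlo by simp
      qed (use elim in auto)
      finally show ?case unfolding massflux_def by auto
    qed
    have "C0_H1 T (l e) (\<lambda>t x. massflux (a e) (rho e t x) (w e t x)) (dM e)"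
      using bspec[OF E1 e, THEN conjunct2, THEN conjunct2, THEN conjunct2] .
    then have "H1_on (l e) (\<lambda>x. massflux (a e) (rho e t x) (w e t x)) (dM e t)"
      using t by (rule H1_of_C0)
    from AE_cont_closed[OF l H1_cont[OF this] closed_atLeastAtMost ae2 x]
    show "\<bar>massflux (a e) (rho e t x) (w e t x)\<bar> \<le> ahi*rhi*wbar" by auto
  qed
qed

lemma vertex_bound:
  fixes Hs Hs' M M' nn dl :: "'e \<Rightarrow> real"
  assumes fin: "finite A" and cardA: "card A \<le> N"
    and bnd: "\<And>e. e \<in> A \<Longrightarrow> \<bar>M e\<bar> \<le> K \<and> \<bar>M' e\<bar> \<le> K \<and> \<bar>nn e\<bar> \<le> 1 \<and> \<bar>dl e\<bar> \<le> D"
    and main: "- (\<Sum>e\<in>A. (Hs e - Hs' e) * (M e - M' e) * nn e) \<le> 2 * K * S"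
    and K: "0 \<le> K" and D: "0 \<le> D"
  shows "- (\<Sum>e\<in>A. (Hs e - (Hs' e + dl e)) * (M e - M' e) * nn e) \<le> 2 * K * S + real N * (2 * K * D)"
proof -
  have split: "(\<Sum>e\<in>A. (Hs e - (Hs' e + dl e)) * (M e - M' e) * nn e)
      = (\<Sum>e\<in>A. (Hs e - Hs' e) * (M e - M' e) * nn e) - (\<Sum>e\<in>A. dl e * (M e - M' e) * nn e)"
    by (simp add: sum_subtractf[symmetric] algebra_simps)
  have each: "dl e * (M e - M' e) * nn e \<le> 2 * K * D" if e: "e \<in> A" for e
  proof -
    note b = bnd[OF e]
    have m: "\<bar>M e - M' e\<bar> \<le> 2 * K" using b by linarith
    have "\<bar>dl e * (M e - M' e) * nn e\<bar> = \<bar>dl e\<bar> * \<bar>M e - M' e\<bar> * \<bar>nn e\<bar>" by (simp add: abs_mult)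
    also have "\<dots> \<le> (D * (2 * K)) * 1"
    proof (rule mult_mono)
      show "\<bar>dl e\<bar> * \<bar>M e - M' e\<bar> \<le> D * (2 * K)"
        by (rule mult_mono) (use b m D in auto)
    qed (use b D K in auto)
    finally have X: "\<bar>dl e * (M e - M' e) * nn e\<bar> \<le> D * (2 * K) * 1" .
    have eq: "D * (2 * K) * 1 = 2 * K * D" by simp
    show ?thesis using X eq abs_ge_self[of "dl e * (M e - M' e) * nn e"] by linarith
  qed
  have "(\<Sum>e\<in>A. dl e * (M e - M' e) * nn e) \<le> (\<Sum>e\<in>A. 2 * K * D)"
    by (rule sum_mono) (rule each)
  also have "\<dots> = real (card A) * (2 * K * D)" by simp
  also have "\<dots> \<le> real N * (2 * K * D)"
    using cardA K D by (intro mult_right_mono) auto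
  finally show ?thesis using split main by linarith
qed

lemma sqrt_sum_ge:
  fixes f :: "'a \<Rightarrow> real"
  assumes "finite B" "v \<in> B"
  shows "\<bar>f v\<bar> \<le> sqrt (\<Sum>u\<in>B. (f u)\<^sup>2)"
proof -
  have "(f v)\<^sup>2 \<le> (\<Sum>u\<in>B. (f u)\<^sup>2)"
    by (rule member_le_sum) (use assms in auto)
  then have "sqrt ((f v)\<^sup>2) \<le> sqrt (\<Sum>u\<in>B. (f u)\<^sup>2)" by (rule real_sqrt_le_mono)
  then show ?thesis by simp
qed

lemma enth_split:
  "enthalpy eps P g zz r ww = enthalpy eps' P g zz r ww + (eps\<^sup>2 - eps'\<^sup>2) * ww\<^sup>2 / 2"
  unfolding enthalpy_def by (simp add: field_simps)

lemma main_bound: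
  fixes V :: "'v set" and E :: "'e set" and src tgt :: "'e \<Rightarrow> 'v" and l :: "'e \<Rightarrow> real"
  assumes graph: "network_graph V E src tgt l"
    and rlo: "0 < rlo" and rr: "rlo \<le> rhi" and wb: "0 < wbar" and al: "0 < alo" and aa: "alo \<le> ahi"
    and aE: "\<forall>e\<in>E. alo \<le> a e \<and> a e \<le> ahi \<and> (\<forall>x\<in>{0..l e}. \<bar>g * z e x\<bar> \<le> gbar * zbar) \<and>
            gamlo \<le> gam e \<and> gam e \<le> gamhi \<and> gamlo \<le> gam' e \<and> gam' e \<le> gamhi"
    and cns1: "classical_network_solution V E src tgt l a z g P eps gam hb rlo rhi wbar T rho w"
    and cns2: "classical_network_solution V E src tgt l a z g P eps' gam' hb' rlo rhi wbar T rho' w'"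
    and lip: "\<forall>e\<in>E. Lip-lipschitz_on ({0..T} \<times> {0..l e}) (\<lambda>(t, x). rho' e t x) \<and>
            Lip-lipschitz_on ({0..T} \<times> {0..l e}) (\<lambda>(t, x). w' e t x)"
    and t: "t \<in> {0..T}"
  shows "- (\<Sum>v\<in>V. \<Sum>e\<in>edges_at E src tgt v.
               (enthalpy eps P g (z e (vpos tgt l v e)) (rho e t (vpos tgt l v e)) (w e t (vpos tgt l v e))
                - enthalpy eps P g (z e (vpos tgt l v e)) (rho' e t (vpos tgt l v e)) (w' e t (vpos tgt l v e)))
             * (massflux (a e) (rho e t (vpos tgt l v e)) (w e t (vpos tgt l v e))
                - massflux (a e) (rho' e t (vpos tgt l v e)) (w' e t (vpos tgt l v e)))
             * nsign src tgt v e)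
          \<le> real (card V) * (2 * (ahi * rhi * wbar) + real (card E) * (ahi * rhi * wbar) * wbar\<^sup>2) *
             (sqrt (\<Sum>v\<in>boundary_vertices V E src tgt. (hb v - hb' v)\<^sup>2) + \<bar>eps\<^sup>2 - eps'\<^sup>2\<bar>)"
proof -
  define K where "K = ahi * rhi * wbar"
  define S where "S = sqrt (\<Sum>v\<in>boundary_vertices V E src tgt. (hb v - hb' v)\<^sup>2)"
  define Dl where "Dl = \<bar>eps\<^sup>2 - eps'\<^sup>2\<bar>"
  define C0 where "C0 = 2 * K + real (card E) * K * wbar\<^sup>2"
  define H1 where "H1 v e = enthalpy eps P g (z e (vpos tgt l v e)) (rho e t (vpos tgt l v e)) (w e t (vpos tgt l v e))" for v e
  define H2 where "H2 v e = enthalpy eps' P g (z e (vpos tgt l v e)) (rho' e t (vpos tgt l v e)) (w' e t (vpos tgt l v e))" for v e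
  define H2e where "H2e v e = enthalpy eps P g (z e (vpos tgt l v e)) (rho' e t (vpos tgt l v e)) (w' e t (vpos tgt l v e))" for v e
  define F1 where "F1 v e = massflux (a e) (rho e t (vpos tgt l v e)) (w e t (vpos tgt l v e))" for v e
  define F2 where "F2 v e = massflux (a e) (rho' e t (vpos tgt l v e)) (w' e t (vpos tgt l v e))" for v e
  define dl where "dl v e = (eps\<^sup>2 - eps'\<^sup>2) * (w' e t (vpos tgt l v e))\<^sup>2 / 2" for v e
  have K0: "0 \<le> K" unfolding K_def using rlo rr wb al aa by simp
  have S0: "0 \<le> S" unfolding S_def by (simp add: sum_nonneg)
  have Dl0: "0 \<le> Dl" unfolding Dl_def by simp
  note gf = graph_facts[OF graph]
  have a0: "\<forall>e\<in>E. 0 \<le> a e \<and> a e \<le> ahi"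
  proof
    fix e assume "e \<in> E"
    then show "0 \<le> a e \<and> a e \<le> ahi" using bspec[OF aE \<open>e \<in> E\<close>] al by auto
  qed
  note c1 = cns_facts[OF cns1 graph a0 rlo t]
  note c2 = cns_facts[OF cns2 graph a0 rlo t]
  have W2: "\<forall>e\<in>E. \<forall>x\<in>{0..l e}. \<bar>w' e t x\<bar> \<le> wbar"
  proof (intro ballI)
    fix e x assume e: "e \<in> E" and x: "x \<in> {0..l e}"
    have l: "0 < l e" using bspec[OF gf(3) e] by simp
    have cont: "continuous_on {0..l e} (w' e t)"
      using lip_cont[OF bspec[OF lip e, THEN conjunct2] t] .
    have ae: "AE x in lebesgue_on {0..l e}. w' e t x \<in> {-wbar..wbar}"
      using bspec[OF c2(2) e] by eventually_elim auto
    from AE_cont_closed[OF l cont closed_atLeastAtMost ae x] show "\<bar>w' e t x\<bar> \<le> wbar" by auto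
  qed
  have finB: "finite (boundary_vertices V E src tgt)"
    using gf(1) unfolding boundary_vertices_def by simp
  have vb: "- (\<Sum>e\<in>edges_at E src tgt v. (H1 v e - H2e v e) * (F1 v e - F2 v e) * nsign src tgt v e)
      \<le> C0 * (S + Dl)" if v: "v \<in> V" for v
  proof -
    let ?A = "edges_at E src tgt v"
    have AE: "?A \<subseteq> E" unfolding edges_at_def by auto
    have finA: "finite ?A" using finite_subset[OF AE gf(2)] .
    have cardA: "card ?A \<le> card E" using card_mono[OF gf(2) AE] .
    have x0in: "vpos tgt l v e \<in> {0..l e}" if "e \<in> ?A" for e
    proof -
      have "0 < l e" using bspec[OF gf(3)] AE that by auto
      then show ?thesis unfolding vpos_def by auto
    qed
    have bnd: "\<bar>F1 v e\<bar> \<le> K \<and> \<bar>F2 v e\<bar> \<le> K \<and> \<bar>nsign src tgt v e\<bar> \<le> 1 \<and> \<bar>dl v e\<bar> \<le> Dl * wbar\<^sup>2 / 2"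
      if e: "e \<in> ?A" for e
    proof (intro conjI)
      have eE: "e \<in> E" using AE e by auto
      show "\<bar>F1 v e\<bar> \<le> K" unfolding F1_def K_def using c1(1) eE x0in[OF e] by blast
      show "\<bar>F2 v e\<bar> \<le> K" unfolding F2_def K_def using c2(1) eE x0in[OF e] by blast
      show "\<bar>nsign src tgt v e\<bar> \<le> 1" unfolding nsign_def by simp
      have w: "\<bar>w' e t (vpos tgt l v e)\<bar> \<le> wbar" using W2 eE x0in[OF e] by blast
      have "(w' e t (vpos tgt l v e))\<^sup>2 \<le> wbar\<^sup>2"
        using power_mono[OF w, of 2] by simp
      then have "\<bar>eps\<^sup>2 - eps'\<^sup>2\<bar> * (w' e t (vpos tgt l v e))\<^sup>2 \<le> \<bar>eps\<^sup>2 - eps'\<^sup>2\<bar> * wbar\<^sup>2"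
        by (rule mult_left_mono) simp
      then show "\<bar>dl v e\<bar> \<le> Dl * wbar\<^sup>2 / 2" unfolding dl_def Dl_def by (simp add: abs_mult)
    qed
    have main: "- (\<Sum>e\<in>?A. (H1 v e - H2 v e) * (F1 v e - F2 v e) * nsign src tgt v e) \<le> 2 * K * S"
    proof (cases "v \<in> inner_vertices V E src tgt")
      case True
      from bspec[OF c1(3) True] obtain hv where
        s1: "(\<Sum>e\<in>?A. F1 v e * nsign src tgt v e) = 0" and h1: "\<forall>e\<in>?A. H1 v e = hv"
        unfolding F1_def H1_def by blast
      from bspec[OF c2(3) True] obtain hv' where
        s2: "(\<Sum>e\<in>?A. F2 v e * nsign src tgt v e) = 0" and h2: "\<forall>e\<in>?A. H2 v e = hv'"
        unfolding F2_def H2_def by blast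
      have "(\<Sum>e\<in>?A. (H1 v e - H2 v e) * (F1 v e - F2 v e) * nsign src tgt v e)
          = (\<Sum>e\<in>?A. (hv - hv') * (F1 v e * nsign src tgt v e) - (hv - hv') * (F2 v e * nsign src tgt v e))"
        by (rule sum.cong) (use h1 h2 in \<open>auto simp: algebra_simps\<close>)
      also have "\<dots> = (hv - hv') * (\<Sum>e\<in>?A. F1 v e * nsign src tgt v e) - (hv - hv') * (\<Sum>e\<in>?A. F2 v e * nsign src tgt v e)"
        by (simp add: sum_subtractf sum_distrib_left)
      also have "\<dots> = 0" using s1 s2 by simp
      finally show ?thesis using K0 S0 by simp
    next
      case False
      show ?thesis
      proof (cases "v \<in> boundary_vertices V E src tgt")
        case True
        then have "card ?A = 1" unfolding boundary_vertices_def by simp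
        then obtain e where Ae: "?A = {e}" by (rule card_1_singletonE)
        then have e: "e \<in> ?A" by simp
        have b1: "H1 v e = hb v" using bspec[OF bspec[OF c1(4) True] e] unfolding H1_def .
        have b2: "H2 v e = hb' v" using bspec[OF bspec[OF c2(4) True] e] unfolding H2_def .
        note be = bnd[OF e]
        have Mb: "\<bar>F1 v e - F2 v e\<bar> \<le> 2 * K" using be by linarith
        have hS: "\<bar>hb v - hb' v\<bar> \<le> S"
          using sqrt_sum_ge[OF finB True, of "\<lambda>u. hb u - hb' u"] unfolding S_def by simp
        have "- ((hb v - hb' v) * (F1 v e - F2 v e) * nsign src tgt v e)
            \<le> \<bar>(hb v - hb' v) * (F1 v e - F2 v e) * nsign src tgt v e\<bar>" by simp
        also have "\<dots> = \<bar>hb v - hb' v\<bar> * \<bar>F1 v e - F2 v e\<bar> * \<bar>nsign src tgt v e\<bar>" by (simp add: abs_mult)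
        also have "\<dots> \<le> (S * (2 * K)) * 1"
        proof (rule mult_mono)
          show "\<bar>hb v - hb' v\<bar> * \<bar>F1 v e - F2 v e\<bar> \<le> S * (2 * K)"
            by (rule mult_mono) (use hS Mb S0 in auto)
        qed (use be S0 K0 in auto)
        finally show ?thesis using Ae b1 b2 by (simp add: algebra_simps)
      next
        case False2: False
        have "\<not> card ?A > 1" using False v unfolding inner_vertices_def by simp
        moreover have "card ?A \<noteq> 1" using False2 v unfolding boundary_vertices_def by simp
        ultimately have "card ?A = 0" by linarith
        then have "?A = {}" using finA by simp
        then show ?thesis using K0 S0 by simp
      qed
    qed
    have D0: "0 \<le> Dl * wbar\<^sup>2 / 2"
      by (rule divide_nonneg_pos[OF mult_nonneg_nonneg[OF Dl0 zero_le_power2]]) simp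
    have vb0: "- (\<Sum>e\<in>?A. (H1 v e - (H2 v e + dl v e)) * (F1 v e - F2 v e) * nsign src tgt v e)
        \<le> 2 * K * S + real (card E) * (2 * K * (Dl * wbar\<^sup>2 / 2))"
      by (rule vertex_bound[where Hs="H1 v" and Hs'="H2 v" and M="F1 v" and M'="F2 v"
            and nn="nsign src tgt v" and dl="dl v", OF finA cardA bnd main K0 D0])
    have eqs: "H2e v e = H2 v e + dl v e" for e
      unfolding H2e_def H2_def dl_def by (rule enth_split)
    have "2 * K * S + real (card E) * (2 * K * (Dl * wbar\<^sup>2 / 2)) \<le> C0 * (S + Dl)"
    proof -
      have eq: "C0 * (S + Dl) = 2 * K * S + real (card E) * (2 * K * (Dl * wbar\<^sup>2 / 2))
                 + (2 * K * Dl + real (card E) * K * wbar\<^sup>2 * S)"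
        unfolding C0_def by (simp add: field_simps)
      have "0 \<le> 2 * K * Dl + real (card E) * K * wbar\<^sup>2 * S" using K0 Dl0 S0 by simp
      then show ?thesis using eq by linarith
    qed
    then show ?thesis using vb0 by (simp add: eqs)
  qed
  have "- (\<Sum>v\<in>V. \<Sum>e\<in>edges_at E src tgt v. (H1 v e - H2e v e) * (F1 v e - F2 v e) * nsign src tgt v e)
      = (\<Sum>v\<in>V. - (\<Sum>e\<in>edges_at E src tgt v. (H1 v e - H2e v e) * (F1 v e - F2 v e) * nsign src tgt v e))"
    by (simp add: sum_negf)
  also have "\<dots> \<le> (\<Sum>v\<in>V. C0 * (S + Dl))" by (rule sum_mono) (rule vb)
  also have "\<dots> = real (card V) * C0 * (S + Dl)" by simp
  finally have fin: "- (\<Sum>v\<in>V. \<Sum>e\<in>edges_at E src tgt v. (H1 v e - H2e v e) * (F1 v e - F2 v e) * nsign src tgt v e)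
      \<le> real (card V) * C0 * (S + Dl)" .
  then show ?thesis unfolding H1_def H2e_def F1_def F2_def C0_def K_def S_def Dl_def .
qed



theorem lemma5p1:
  fixes V :: "'v set" and E :: "'e set" and src tgt :: "'e \<Rightarrow> 'v" and l :: "'e \<Rightarrow> real"
    and P :: "real \<Rightarrow> real" and g :: real
    and rlo rhi wbar epsbar alo ahi gbar zbar gamlo gamhi Lip :: real
  assumes graph: "network_graph V E src tgt l"
    and P: "smooth_strictly_convex P"
    and A1: "0 < rlo" "rlo \<le> rhi" "0 < wbar" "0 < epsbar"
      "\<forall>r\<in>{rlo..rhi}. r * (deriv ^^ 2) P r \<ge> 4 * epsbar\<^sup>2 * wbar\<^sup>2"
      "0 < alo" "alo \<le> ahi" "0 < gbar" "0 < zbar"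
    and A2: "0 < gamlo" "gamlo \<le> gamhi"
    and Lip: "0 \<le> Lip"
  shows "\<exists>C. \<forall>a z gam gam' eps eps' hb hb' T rho w rho' w'.
     (\<forall>e\<in>E. alo \<le> a e \<and> a e \<le> ahi \<and> (\<forall>x\<in>{0..l e}. \<bar>g * z e x\<bar> \<le> gbar * zbar) \<and>
            gamlo \<le> gam e \<and> gam e \<le> gamhi \<and> gamlo \<le> gam' e \<and> gam' e \<le> gamhi) \<and>
     0 \<le> eps \<and> eps \<le> epsbar \<and> 0 \<le> eps' \<and> eps' \<le> epsbar \<and> 0 \<le> T \<and>
     classical_network_solution V E src tgt l a z g P eps gam hb rlo rhi wbar T rho w \<and>
     classical_network_solution V E src tgt l a z g P eps' gam' hb' rlo rhi wbar T rho' w' \<and>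
     (\<forall>e\<in>E. Lip-lipschitz_on ({0..T} \<times> {0..l e}) (\<lambda>(t, x). rho' e t x) \<and>
            Lip-lipschitz_on ({0..T} \<times> {0..l e}) (\<lambda>(t, x). w' e t x))
     \<longrightarrow> (\<forall>t\<in>{0..T}.
          - (\<Sum>v\<in>V. \<Sum>e\<in>edges_at E src tgt v.
               (enthalpy eps P g (z e (vpos tgt l v e)) (rho e t (vpos tgt l v e)) (w e t (vpos tgt l v e))
                - enthalpy eps P g (z e (vpos tgt l v e)) (rho' e t (vpos tgt l v e)) (w' e t (vpos tgt l v e)))
             * (massflux (a e) (rho e t (vpos tgt l v e)) (w e t (vpos tgt l v e))
                - massflux (a e) (rho' e t (vpos tgt l v e)) (w' e t (vpos tgt l v e)))
             * nsign src tgt v e)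
          \<le> C * (sqrt (\<Sum>v\<in>boundary_vertices V E src tgt. (hb v - hb' v)\<^sup>2) + \<bar>eps\<^sup>2 - eps'\<^sup>2\<bar>))"
proof (rule exI[of _ "real (card V) * (2 * (ahi * rhi * wbar) + real (card E) * (ahi * rhi * wbar) * wbar\<^sup>2)"],
    intro allI impI ballI, goal_cases)
  case (1 a z gam gam' eps eps' hb hb' T rho w rho' w' t)
  note H = 1(1)
  note cns1 = H[THEN conjunct2, THEN conjunct2, THEN conjunct2, THEN conjunct2, THEN conjunct2,
                THEN conjunct2, THEN conjunct1]
  note cns2 = H[THEN conjunct2, THEN conjunct2, THEN conjunct2, THEN conjunct2, THEN conjunct2,
                THEN conjunct2, THEN conjunct2, THEN conjunct1]
  note lip = H[THEN conjunct2, THEN conjunct2, THEN conjunct2, THEN conjunct2, THEN conjunct2,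
                THEN conjunct2, THEN conjunct2, THEN conjunct2]
  show ?case
    by (rule main_bound[OF graph A1(1) A1(2) A1(3) A1(6) A1(7) H[THEN conjunct1] cns1 cns2 lip 1(2)])
qed

end
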